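(* There exists a random coverage collaborative learning problem with strategy space $\Theta=\mathbb{R}_+^k$ whose set of envy-free equilibria is non-convex.
   Context: Random coverage: finite domain $\mathcal{X}$; agent $i$ has a distribution $(q_{ix})_{x\in\mathcal{X}}$ on $\mathcal{X}$. For integer sample counts ${\bf m}$, $U_i({\bf m})=1-\frac12\sum_{x\in\mathcal{X}}q_{ix}\prod_{j=1}^k(1-q_{jx})^{m_j}$; for real ${\boldsymbol\theta}\in\mathbb{R}_+^k$, $u_i({\boldsymbol\theta})=\mathbb{E}[U_i({\bf m})]$ where the $m_j$ are independent with $m_j=\lfloor\theta_j\rfloor+\mathrm{Bernoulli}(\theta_j-\lfloor\theta_j\rfloor)$. Each agent has a threshold $\mu_i$; ${\boldsymbol\theta}$ is feasible if $u_i({\boldsymbol\theta})\ge\mu_i$ for all $i$. A feasible ${\boldsymbol\theta}$ is an envy-free equilibrium if there are no $i,j$ with $\theta_j<\theta_i$ and $u_i({\boldsymbol\theta}^{(i,j)})\ge\mu_i$, where ${\boldsymbol\theta}^{(i,j)}$ is ${\boldsymbol\theta}$ with entries $i$ and $j$ swapped. *)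

theory Defs
  imports "HOL-Probability.Probability"
begin

text \<open>Agents are indexed by 0,...,k-1,
  the finite domain is a finite set D of naturals, q i x is the probability
  agent i places on point x, and mu i is the threshold of agent i.
  A strategy (vector of sample counts) is a function nat => real; only the
  entries 0..k-1 are relevant.\<close>

definition U_int :: "nat set \<Rightarrow> nat \<Rightarrow> (nat \<Rightarrow> nat \<Rightarrow> real) \<Rightarrow> nat \<Rightarrow> (nat \<Rightarrow> nat) \<Rightarrow> real" where
  "U_int D k q i m = 1 - (1/2) * (\<Sum>x\<in>D. q i x * (\<Prod>j<k. (1 - q j x) ^ (m j)))"

definition round_pmf :: "nat \<Rightarrow> (nat \<Rightarrow> real) \<Rightarrow> (nat \<Rightarrow> nat) pmf" where
  "round_pmf k \<theta> = Pi_pmf {..<k} 0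
     (\<lambda>j. map_pmf (\<lambda>b. nat \<lfloor>\<theta> j\<rfloor> + (if b then 1 else 0))
                   (bernoulli_pmf (\<theta> j - of_int \<lfloor>\<theta> j\<rfloor>)))"

definition u_real :: "nat set \<Rightarrow> nat \<Rightarrow> (nat \<Rightarrow> nat \<Rightarrow> real) \<Rightarrow> nat \<Rightarrow> (nat \<Rightarrow> real) \<Rightarrow> real" where
  "u_real D k q i \<theta> = measure_pmf.expectation (round_pmf k \<theta>) (\<lambda>m. U_int D k q i m)"

definition in_strategy_space :: "nat \<Rightarrow> (nat \<Rightarrow> real) \<Rightarrow> bool" where
  "in_strategy_space k \<theta> \<longleftrightarrow> (\<forall>j<k. 0 \<le> \<theta> j)"

definition feasible :: "nat set \<Rightarrow> nat \<Rightarrow> (nat \<Rightarrow> nat \<Rightarrow> real) \<Rightarrow> (nat \<Rightarrow> real) \<Rightarrow> (nat \<Rightarrow> real) \<Rightarrow> bool" where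
  "feasible D k q \<mu> \<theta> \<longleftrightarrow> in_strategy_space k \<theta> \<and> (\<forall>i<k. u_real D k q i \<theta> \<ge> \<mu> i)"

definition swap_entries :: "(nat \<Rightarrow> real) \<Rightarrow> nat \<Rightarrow> nat \<Rightarrow> (nat \<Rightarrow> real)" where
  "swap_entries \<theta> i j = \<theta>(i := \<theta> j, j := \<theta> i)"

definition envy_free_eq :: "nat set \<Rightarrow> nat \<Rightarrow> (nat \<Rightarrow> nat \<Rightarrow> real) \<Rightarrow> (nat \<Rightarrow> real) \<Rightarrow> (nat \<Rightarrow> real) \<Rightarrow> bool" where
  "envy_free_eq D k q \<mu> \<theta> \<longleftrightarrow> feasible D k q \<mu> \<theta> \<and>
     \<not> (\<exists>i<k. \<exists>j<k. \<theta> j < \<theta> i \<and> u_real D k q i (swap_entries \<theta> i j) \<ge> \<mu> i)"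

definition is_distribution :: "nat set \<Rightarrow> (nat \<Rightarrow> real) \<Rightarrow> bool" where
  "is_distribution D p \<longleftrightarrow> (\<forall>x\<in>D. 0 \<le> p x) \<and> sum p D = 1"

end

theory Submission
  imports Defs
begin

lemma bern0: "bernoulli_pmf 0 = return_pmf False"
  by (rule pmf_eqI) (auto simp: pmf_bernoulli_True pmf_bernoulli_False split: split_indicator)

lemma u_real_nat:
  assumes "\<And>j. j < k \<Longrightarrow> \<theta> j = real (n j)"
  shows "u_real D k q i \<theta> = U_int D k q i (\<lambda>j. if j < k then n j else 0)"
proof -
  have "round_pmf k \<theta> = Pi_pmf {..<k} 0 (\<lambda>j. return_pmf (n j))"
    unfolding round_pmf_def
    by (rule Pi_pmf_cong) (auto simp: assms bern0)
  also have "\<dots> = return_pmf (\<lambda>j. if j < k then n j else 0)"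
    by simp
  finally show ?thesis unfolding u_real_def by simp
qed

lemma ex2: "(\<exists>i<(2::nat). P i) = (P 0 \<or> P 1)"
  by (auto simp: numeral_2_eq_2 less_Suc_eq)

lemma all2: "(\<forall>i<(2::nat). P i) = (P 0 \<and> P 1)"
  by (auto simp: numeral_2_eq_2 less_Suc_eq)

lemma prod2: "(\<Prod>j<(2::nat). f j) = (f 0 * (f 1::real))"
  by (simp add: numeral_2_eq_2)

definition qq :: "nat \<Rightarrow> nat \<Rightarrow> real" where "qq i x = (if i = x then 1 else 0)"
definition mu0 :: "nat \<Rightarrow> real" where "mu0 i = (if i = 0 then 1/2 else 1)"

lemma U2: "U_int {0,1} 2 qq i m =
   1 - (1/2) * (qq i 0 * ((1 - qq 0 0) ^ m 0 * (1 - qq 1 0) ^ m 1)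
              + qq i 1 * ((1 - qq 0 1) ^ m 0 * (1 - qq 1 1) ^ m 1))"
  unfolding U_int_def by (simp add: prod2)

theorem theorem9:
  shows "\<exists>(D::nat set) (k::nat) (q::nat \<Rightarrow> nat \<Rightarrow> real) (\<mu>::nat \<Rightarrow> real).
           finite D \<and> (\<forall>i<k. is_distribution D (q i)) \<and>
           (\<exists>\<theta>1 \<theta>2 (t::real). envy_free_eq D k q \<mu> \<theta>1 \<and> envy_free_eq D k q \<mu> \<theta>2 \<and>
              0 \<le> t \<and> t \<le> 1 \<and>
              \<not> envy_free_eq D k q \<mu> (\<lambda>j. (1 - t) * \<theta>1 j + t * \<theta>2 j))"
proof -
  define th1 :: "nat \<Rightarrow> real" where "th1 = (\<lambda>j. if j = 1 then 2 else 0)"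
  define th2 :: "nat \<Rightarrow> real" where "th2 = (\<lambda>j. 2)"
  have dist: "\<forall>i<2. is_distribution {0,1} (qq i)"
    unfolding all2 is_distribution_def qq_def by simp
  have e1: "envy_free_eq {0,1} 2 qq mu0 th1"
  proof -
    have a: "u_real {0,1} 2 qq i th1 = U_int {0,1} 2 qq i (\<lambda>j. if j < 2 then (if j = 1 then 2 else 0) else 0)" for i
      by (rule u_real_nat) (auto simp: th1_def)
    have b: "u_real {0,1} 2 qq i (swap_entries th1 1 0) = U_int {0,1} 2 qq i (\<lambda>j. if j < 2 then (if j = 0 then 2 else 0) else 0)" for i
      by (rule u_real_nat) (auto simp: th1_def swap_entries_def)
    show ?thesis unfolding envy_free_eq_def feasible_def in_strategy_space_def ex2 all2 a b U2
      by (auto simp: qq_def mu0_def th1_def)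
  qed
  have e2: "envy_free_eq {0,1} 2 qq mu0 th2"
  proof -
    have a: "u_real {0,1} 2 qq i th2 = U_int {0,1} 2 qq i (\<lambda>j. if j < 2 then 2 else 0)" for i
      by (rule u_real_nat) (auto simp: th2_def)
    show ?thesis unfolding envy_free_eq_def feasible_def in_strategy_space_def ex2 all2 a U2
      by (auto simp: qq_def mu0_def th2_def)
  qed
  have e3: "\<not> envy_free_eq {0,1} 2 qq mu0 (\<lambda>j. (1 - 1/2) * th1 j + 1/2 * th2 j)"
  proof -
    have b: "u_real {0,1} 2 qq 1 (swap_entries (\<lambda>j. (1 - 1/2) * th1 j + 1/2 * th2 j) 1 0)
       = U_int {0,1} 2 qq 1 (\<lambda>j. if j < 2 then (if j = 0 then 2 else 1) else 0)"
      by (rule u_real_nat) (auto simp: th1_def th2_def swap_entries_def)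
    have "u_real {0,1} 2 qq 1 (swap_entries (\<lambda>j. (1 - 1/2) * th1 j + 1/2 * th2 j) 1 0) \<ge> mu0 1"
      unfolding b U2 by (simp add: qq_def mu0_def)
    moreover have "(\<lambda>j. (1 - 1/2) * th1 j + 1/2 * th2 j) 0 < (\<lambda>j. (1 - 1/2) * th1 j + 1/2 * th2 j) (1::nat)"
      by (simp add: th1_def th2_def)
    ultimately show ?thesis unfolding envy_free_eq_def by force
  qed
  show ?thesis
    apply (rule exI[of _ "{0,1}"], rule exI[of _ 2], rule exI[of _ qq], rule exI[of _ mu0])
    using dist e1 e2 e3 by (intro conjI exI[of _ th1] exI[of _ th2] exI[of _ "1/2"]) auto
qed

end
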